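(* Let $u,v$ be sufficiently large positive real numbers such that $v^{9/10}\le u\le2v$. Let $t>1$ be a real number that is not an integer expressible as a sum of two squares, such that $|u-t|\le v^{1/3}$. Then \[ \sum_{m:\,|m-u|>v^{1/2}}r(m)\Big(\frac1{m-t}-\frac{m}{m^2+1}\Big)=-\pi\log t+O(1). \]
   Context: $r(m)=\#\{(a,b)\in\mathbb Z^2:a^2+b^2=m\}$; the sum is over integers $m\ge1$. *)

theory Defs
  imports "HOL-Analysis.Analysis"
begin

definition r2 :: "nat \<Rightarrow> nat" where
  "r2 m = card {p :: int \<times> int. (fst p)^2 + (snd p)^2 = int m}"

end

theory Submission
  imports Defs "HOL-Real_Asymp.Real_Asymp"
begin


lemma quarter_deriv:
  fixes R x N :: real
  assumes Rpos: "R > 0" and R2: "R\<^sup>2 = N" and x0: "0 < x" "x < R"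
  shows "((\<lambda>x. (x * sqrt (N - x\<^sup>2) + N * arcsin (x / R)) / 2) has_real_derivative sqrt (N - x\<^sup>2)) (at x)"
proof -
  have "x\<^sup>2 < R\<^sup>2" by (rule power_strict_mono) (use x0 in auto)
  hence pos: "N - x\<^sup>2 > 0" using R2 by simp
  have xR: "-1 < x / R" "x / R < 1" using x0 Rpos by (auto simp: divide_simps)
  have s1: "sqrt (1 - (x/R)\<^sup>2) = sqrt (N - x\<^sup>2) / R"
  proof -
    have "1 - (x/R)\<^sup>2 = (R\<^sup>2 - x\<^sup>2) / R\<^sup>2" using Rpos by (simp add: field_simps)
    hence "1 - (x/R)\<^sup>2 = (N - x\<^sup>2) / R\<^sup>2" using R2 by simp
    thus ?thesis using Rpos by (simp add: real_sqrt_divide)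
  qed
  have e1: "((\<lambda>x. N - x\<^sup>2) has_real_derivative (0 - real 2 * x ^ (2 - Suc 0))) (at x)"
    by (intro DERIV_diff DERIV_const DERIV_pow)
  have e2: "((\<lambda>x. sqrt (N - x\<^sup>2)) has_real_derivative
              (inverse (sqrt (N - x\<^sup>2)) / 2 * (0 - real 2 * x ^ (2 - Suc 0)))) (at x)"
    by (rule DERIV_chain2[OF DERIV_real_sqrt e1]) (use pos in simp)
  have e3: "((\<lambda>x. x * sqrt (N - x\<^sup>2)) has_real_derivative
              (1 * sqrt (N - x\<^sup>2) + x * (inverse (sqrt (N - x\<^sup>2)) / 2 * (0 - real 2 * x ^ (2 - Suc 0))))) (at x)"
    using DERIV_mult[OF DERIV_ident e2] by (simp add: mult.assoc mult.left_commute)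
  have e4: "((\<lambda>x. x / R) has_real_derivative (1 / R)) (at x)"
    using DERIV_cdivide[OF DERIV_ident, of R x] by simp
  have e5: "((\<lambda>x. arcsin (x / R)) has_real_derivative (inverse (sqrt (1 - (x/R)\<^sup>2)) * (1 / R))) (at x)"
    by (rule DERIV_chain2[OF DERIV_arcsin e4]) (use xR in auto)
  have e6: "((\<lambda>x. (x * sqrt (N - x\<^sup>2) + N * arcsin (x / R)) / 2) has_real_derivative
     ((1 * sqrt (N - x\<^sup>2) + x * (inverse (sqrt (N - x\<^sup>2)) / 2 * (0 - real 2 * x ^ (2 - Suc 0))))
      + N * (inverse (sqrt (1 - (x/R)\<^sup>2)) * (1 / R))) / 2) (at x)"
    by (rule DERIV_cdivide[OF DERIV_add[OF e3 DERIV_cmult[OF e5]]])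
  have sq: "sqrt (N - x\<^sup>2) * sqrt (N - x\<^sup>2) = N - x\<^sup>2" using pos by simp
  have sp: "sqrt (N - x\<^sup>2) > 0" using pos by simp
  have "((1 * sqrt (N - x\<^sup>2) + x * (inverse (sqrt (N - x\<^sup>2)) / 2 * (0 - real 2 * x ^ (2 - Suc 0))))
      + N * (inverse (sqrt (1 - (x/R)\<^sup>2)) * (1 / R))) / 2
      = ((sqrt (N - x\<^sup>2) * sqrt (N - x\<^sup>2) - x\<^sup>2) + N) / (2 * sqrt (N - x\<^sup>2))"
    unfolding s1 using sp Rpos by (simp add: field_simps power2_eq_square)
  also have "\<dots> = sqrt (N - x\<^sup>2)" unfolding sq using sp
    by (simp add: field_simps power2_eq_square)
  finally have eq: "((1 * sqrt (N - x\<^sup>2) + x * (inverse (sqrt (N - x\<^sup>2)) / 2 * (0 - real 2 * x ^ (2 - Suc 0))))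
      + N * (inverse (sqrt (1 - (x/R)\<^sup>2)) * (1 / R))) / 2 = sqrt (N - x\<^sup>2)" .
  from e6 show ?thesis unfolding eq .
qed

lemma sqrt_le_self_real: assumes "1 \<le> x" shows "sqrt x \<le> (x::real)"
proof -
  have "1 \<le> sqrt x" using assms by simp
  hence "sqrt x * 1 \<le> sqrt x * sqrt x" by (intro mult_left_mono) auto
  thus ?thesis using assms by simp
qed

lemma integral_quarter:
  fixes n :: nat
  shows "integral {0..real n} (\<lambda>x::real. sqrt (max 0 (real n - x\<^sup>2))) = pi * real n / 4"
proof (cases "n = 0")
  case True then show ?thesis by simp
next
  case False
  define \<phi> where "\<phi> = (\<lambda>x::real. sqrt (max 0 (real n - x\<^sup>2)))"
  define R where "R = sqrt (real n)"
  have Rpos: "R > 0" using False by (simp add: R_def)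
  have R2: "R\<^sup>2 = real n" by (simp add: R_def)
  have Rle: "R \<le> real n" unfolding R_def by (rule sqrt_le_self_real) (use False in simp)
  define F where "F = (\<lambda>x::real. (x * sqrt (real n - x\<^sup>2) + real n * arcsin (x / R)) / 2)"
  have cont: "continuous_on {0..R} F"
  proof -
    have "continuous_on {0..R} (\<lambda>x. arcsin (x / R))"
      by (rule continuous_on_arcsin) (use Rpos in \<open>auto intro!: continuous_intros simp: divide_simps\<close>)
    thus ?thesis unfolding F_def by (intro continuous_intros) (use Rpos in \<open>auto simp: divide_simps\<close>)
  qed
  have der: "(F has_vector_derivative \<phi> x) (at x)" if x: "x \<in> {0<..<R}" for x
  proof -
    have x0: "0 < x" "x < R" using x by auto
    have "x\<^sup>2 < R\<^sup>2" by (rule power_strict_mono) (use x0 in auto)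
    hence "\<phi> x = sqrt (real n - x\<^sup>2)" using R2 by (simp add: \<phi>_def)
    thus ?thesis using quarter_deriv[OF Rpos R2 x0] unfolding F_def
      by (simp add: has_real_derivative_iff_has_vector_derivative)
  qed
  have I1: "(\<phi> has_integral (F R - F 0)) {0..R}"
    by (rule fundamental_theorem_of_calculus_interior[OF _ cont der]) (use Rpos in auto)
  have FR: "F R - F 0 = pi * real n / 4"
    using Rpos R2 by (simp add: F_def)
  have I2: "(\<phi> has_integral 0) {R..real n}"
  proof -
    have "((\<lambda>x. 0::real) has_integral 0) {R..real n}" by simp
    moreover have "\<phi> x = 0" if "x \<in> {R..real n}" for x
    proof -
      have "R\<^sup>2 \<le> x\<^sup>2" using that Rpos by (intro power_mono) auto
      thus ?thesis using R2 by (simp add: \<phi>_def)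
    qed
    ultimately show ?thesis using has_integral_eq[of "{R..real n}" "\<lambda>x. 0" \<phi> 0] by auto
  qed
  have "(\<phi> has_integral (pi * real n / 4 + 0)) {0..real n}"
    using has_integral_combine[OF _ Rle I1[unfolded FR] I2] Rpos by simp
  thus ?thesis by (simp add: integral_unique \<phi>_def)
qed



definition NN :: "nat \<Rightarrow> (int \<times> int) set" where
  "NN n = {p::int \<times> int. (fst p)\<^sup>2 + (snd p)\<^sup>2 \<le> int n}"

lemma int_sq_bound: fixes a X :: int assumes "a\<^sup>2 \<le> X" shows "\<bar>a\<bar> \<le> X"
proof (cases "a = 0")
  case True then show ?thesis using assms by simp
next
  case False
  hence "\<bar>a\<bar> * 1 \<le> \<bar>a\<bar> * \<bar>a\<bar>" by (intro mult_left_mono) auto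
  also have "\<dots> = a\<^sup>2" by (simp add: power2_eq_square abs_mult_self_eq)
  finally show ?thesis using assms by simp
qed

lemma NN_subset: "NN n \<subseteq> {-int n..int n} \<times> {-int n..int n}"
proof
  fix p assume "p \<in> NN n"
  then obtain a b where p: "p = (a, b)" and h: "a\<^sup>2 + b\<^sup>2 \<le> int n" by (cases p) (auto simp: NN_def)
  have "a\<^sup>2 \<le> int n" "b\<^sup>2 \<le> int n" using h zero_le_power2[of a] zero_le_power2[of b] by linarith+
  hence "\<bar>a\<bar> \<le> int n" "\<bar>b\<bar> \<le> int n" by (auto intro: int_sq_bound)
  thus "p \<in> {-int n..int n} \<times> {-int n..int n}" using p by auto
qed

lemma finite_NN: "finite (NN n)"
  by (rule finite_subset[OF NN_subset]) auto

lemma level_subset: "{p::int \<times> int. (fst p)\<^sup>2 + (snd p)\<^sup>2 = int m} \<subseteq> NN m"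
  by (auto simp: NN_def)

lemma finite_level: "finite {p::int \<times> int. (fst p)\<^sup>2 + (snd p)\<^sup>2 = int m}"
  by (rule finite_subset[OF level_subset finite_NN])

lemma sum_r2_NN: "(\<Sum>m\<le>n. r2 m) = card (NN n)"
proof (induction n)
  case 0
  have "NN 0 = {p::int \<times> int. (fst p)\<^sup>2 + (snd p)\<^sup>2 = int 0}"
    by (auto simp: NN_def sum_power2_le_zero_iff)
  thus ?case by (simp add: r2_def)
next
  case (Suc n)
  have eq: "NN (Suc n) = NN n \<union> {p::int \<times> int. (fst p)\<^sup>2 + (snd p)\<^sup>2 = int (Suc n)}"
    by (auto simp: NN_def)
  have disj: "NN n \<inter> {p::int \<times> int. (fst p)\<^sup>2 + (snd p)\<^sup>2 = int (Suc n)} = {}"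
    by (auto simp: NN_def)
  have "card (NN (Suc n)) = card (NN n) + r2 (Suc n)"
    unfolding eq r2_def by (rule card_Un_disjoint[OF finite_NN finite_level disj])
  thus ?case using Suc by simp
qed

lemma r2_0: "r2 0 = 1"
proof -
  have "{p::int \<times> int. (fst p)\<^sup>2 + (snd p)\<^sup>2 = int 0} = {(0,0)}"
    by auto
  thus ?thesis by (simp add: r2_def)
qed

lemma card_sq:
  fixes X :: int assumes X: "0 \<le> X"
  shows "card {b::int. b\<^sup>2 \<le> X} = 2 * nat \<lfloor>sqrt (real_of_int X)\<rfloor> + 1"
proof -
  define k where "k = \<lfloor>sqrt (real_of_int X)\<rfloor>"
  have k0: "0 \<le> k" unfolding k_def using X by simp
  have "b\<^sup>2 \<le> X \<longleftrightarrow> \<bar>b\<bar> \<le> k" for b :: int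
  proof -
    have "b\<^sup>2 \<le> X \<longleftrightarrow> sqrt (real_of_int (b\<^sup>2)) \<le> sqrt (real_of_int X)"
      by (simp only: real_sqrt_le_iff of_int_le_iff)
    also have "sqrt (real_of_int (b\<^sup>2)) = real_of_int \<bar>b\<bar>" by simp
    also have "real_of_int \<bar>b\<bar> \<le> sqrt (real_of_int X) \<longleftrightarrow> \<bar>b\<bar> \<le> k"
      unfolding k_def by (simp add: le_floor_iff)
    finally show ?thesis .
  qed
  hence "{b::int. b\<^sup>2 \<le> X} = {b. \<bar>b\<bar> \<le> k}" by blast
  also have "\<dots> = {-k..k}" by (auto simp: abs_le_iff)
  finally have "{b::int. b\<^sup>2 \<le> X} = {-k..k}" .
  thus ?thesis using k0 by (simp add: k_def nat_add_distrib nat_mult_distrib)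
qed

lemma card_NN_sum: "card (NN n) = (\<Sum>a\<in>{-int n..int n}. card {b::int. b\<^sup>2 \<le> int n - a\<^sup>2})"
proof -
  have "NN n = Sigma {-int n..int n} (\<lambda>a. {b::int. b\<^sup>2 \<le> int n - a\<^sup>2})"
    using NN_subset by (auto simp: NN_def)
  moreover have "finite {b::int. b\<^sup>2 \<le> int n - a\<^sup>2}" for a
  proof -
    have "{b::int. b\<^sup>2 \<le> int n - a\<^sup>2} \<subseteq> {-int n..int n}"
    proof
      fix b assume "b \<in> {b::int. b\<^sup>2 \<le> int n - a\<^sup>2}"
      hence "b\<^sup>2 \<le> int n - a\<^sup>2" by simp
      hence "b\<^sup>2 \<le> int n" using zero_le_power2[of a] by linarith
      hence "\<bar>b\<bar> \<le> int n" by (rule int_sq_bound)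
      thus "b \<in> {-int n..int n}" by auto
    qed
    thus ?thesis by (rule finite_subset) auto
  qed
  ultimately show ?thesis by (simp add: card_SigmaI)
qed

lemma sym_sum:
  fixes f :: "real \<Rightarrow> real"
  shows "(\<Sum>a\<in>{-int n..int n}. f (real_of_int \<bar>a\<bar>)) = 2 * (\<Sum>j\<le>n. f (real j)) - f 0"
proof (induction n)
  case 0 then show ?case by simp
next
  case (Suc n)
  have eq: "{-int (Suc n)..int (Suc n)} = insert (-int (Suc n)) (insert (int (Suc n)) {-int n..int n})"
    by auto
  have n1: "- int (Suc n) \<notin> insert (int (Suc n)) {-int n..int n}" by auto
  have n2: "int (Suc n) \<notin> {-int n..int n}" by auto
  show ?case unfolding eq using Suc n1 n2 by (simp add: algebra_simps)
qed



lemma fiber_err: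
  fixes n :: nat and a :: int
  shows "\<bar>real (card {b::int. b\<^sup>2 \<le> int n - a\<^sup>2}) - 2 * sqrt (max 0 (real n - (real_of_int \<bar>a\<bar>)\<^sup>2))\<bar>
         \<le> (if a\<^sup>2 \<le> int n then 1 else 0)"
proof (cases "a\<^sup>2 \<le> int n")
  case True
  define X where "X = int n - a\<^sup>2"
  have X0: "0 \<le> X" using True by (simp add: X_def)
  have rX: "real_of_int X = real n - (real_of_int \<bar>a\<bar>)\<^sup>2" by (simp add: X_def)
  define s where "s = sqrt (real_of_int X)"
  have c: "real (card {b::int. b\<^sup>2 \<le> X}) = 2 * real_of_int \<lfloor>s\<rfloor> + 1"
    using card_sq[OF X0] X0 by (simp add: s_def)
  have m: "max 0 (real n - (real_of_int \<bar>a\<bar>)\<^sup>2) = real_of_int X" using X0 rX by simp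
  have f1: "real_of_int \<lfloor>s\<rfloor> \<le> s" "s < real_of_int \<lfloor>s\<rfloor> + 1" by linarith+
  have "\<bar>2 * real_of_int \<lfloor>s\<rfloor> + 1 - 2 * s\<bar> \<le> 1" unfolding abs_le_iff using f1 by linarith
  thus ?thesis using True c unfolding m s_def[symmetric] X_def[symmetric] by simp
next
  case False
  have e: "{b::int. b\<^sup>2 \<le> int n - a\<^sup>2} = {}" using False zero_le_power2 by (auto simp: not_le) (smt (verit) zero_le_power2)
  have "(real_of_int \<bar>a\<bar>)\<^sup>2 = real_of_int (a\<^sup>2)" by simp
  hence "real n - (real_of_int \<bar>a\<bar>)\<^sup>2 < 0" using False by linarith
  thus ?thesis using e False by simp
qed

lemma gauss_count:
  fixes n :: nat
  shows "\<bar>real (card (NN n)) - pi * real n\<bar> \<le> 4 * sqrt (real n) + 1"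
proof -
  define \<phi> where "\<phi> = (\<lambda>x::real. sqrt (max 0 (real n - x\<^sup>2)))"
  interpret A: antimono_fun_sum_integral_diff \<phi>
  proof
    fix x y :: real assume "0 \<le> x" "x \<le> y"
    hence "x\<^sup>2 \<le> y\<^sup>2" by (intro power_mono) auto
    thus "\<phi> y \<le> \<phi> x" unfolding \<phi>_def by simp
  next
    fix x :: real show "0 \<le> \<phi> x" unfolding \<phi>_def by simp
  next
    show "continuous_on {0..} \<phi>" unfolding \<phi>_def by (intro continuous_intros)
  qed
  have sd0: "A.sum_integral_diff_series 0 = sqrt (real n)"
    unfolding A.sum_integral_diff_series_def by (simp add: \<phi>_def)
  have S1: "0 \<le> A.sum_integral_diff_series n" by (rule A.sum_integral_diff_series_nonneg)
  have S2: "A.sum_integral_diff_series n \<le> sqrt (real n)"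
    using A.sum_integral_diff_series_antimono[of 0 n] sd0 by simp
  have int: "integral {0..real n} \<phi> = pi * real n / 4" unfolding \<phi>_def by (rule integral_quarter)
  define S where "S = (\<Sum>j\<le>n. \<phi> (real j))"
  have Sb: "pi * real n / 4 \<le> S" "S \<le> pi * real n / 4 + sqrt (real n)"
    using S1 S2 int unfolding A.sum_integral_diff_series_def S_def by auto
  have sym: "(\<Sum>a\<in>{-int n..int n}. \<phi> (real_of_int \<bar>a\<bar>)) = 2 * S - sqrt (real n)"
    using sym_sum[of \<phi> n] by (simp add: S_def \<phi>_def)
  have cnt: "real (card (NN n)) = (\<Sum>a\<in>{-int n..int n}. real (card {b::int. b\<^sup>2 \<le> int n - a\<^sup>2}))"
    by (simp add: card_NN_sum)
  have "\<bar>real (card (NN n)) - 2 * (\<Sum>a\<in>{-int n..int n}. \<phi> (real_of_int \<bar>a\<bar>))\<bar>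
        = \<bar>\<Sum>a\<in>{-int n..int n}. (real (card {b::int. b\<^sup>2 \<le> int n - a\<^sup>2}) - 2 * \<phi> (real_of_int \<bar>a\<bar>))\<bar>"
    unfolding cnt by (simp add: sum_subtractf sum_distrib_left)
  also have "\<dots> \<le> (\<Sum>a\<in>{-int n..int n}. \<bar>real (card {b::int. b\<^sup>2 \<le> int n - a\<^sup>2}) - 2 * \<phi> (real_of_int \<bar>a\<bar>)\<bar>)"
    by (rule sum_abs)
  also have "\<dots> \<le> (\<Sum>a\<in>{-int n..int n}. (if a\<^sup>2 \<le> int n then 1 else 0))"
    by (intro sum_mono) (unfold \<phi>_def, rule fiber_err)
  also have "\<dots> = real (card {a\<in>{-int n..int n}. a\<^sup>2 \<le> int n})"
    by (simp add: sum.inter_filter[symmetric])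
  also have "{a\<in>{-int n..int n}. a\<^sup>2 \<le> int n} = {a. a\<^sup>2 \<le> int n}"
  proof (rule set_eqI)
    fix a :: int
    show "a \<in> {a\<in>{-int n..int n}. a\<^sup>2 \<le> int n} \<longleftrightarrow> a \<in> {a. a\<^sup>2 \<le> int n}"
      using int_sq_bound[of a "int n"] by (auto simp: abs_le_iff)
  qed
  also have "real (card {a::int. a\<^sup>2 \<le> int n}) = 2 * real_of_int \<lfloor>sqrt (real n)\<rfloor> + 1"
    using card_sq[of "int n"] by simp
  also have "\<dots> \<le> 2 * sqrt (real n) + 1" by linarith
  finally have err: "\<bar>real (card (NN n)) - 2 * (2 * S - sqrt (real n))\<bar> \<le> 2 * sqrt (real n) + 1"
    unfolding sym .
  show ?thesis using err Sb unfolding abs_le_iff right_diff_distrib distrib_left apply (elim conjE) apply (intro conjI) by linarith+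
qed



definition EE :: "nat \<Rightarrow> real" where
  "EE n = (\<Sum>m\<in>{1..n}. real (r2 m) - pi)"

lemma EE_card: "EE n = real (card (NN n)) - 1 - pi * real n"
proof -
  have "(\<Sum>m\<le>n. real (r2 m)) = real (card (NN n))"
    using sum_r2_NN[of n] by (metis of_nat_sum)
  moreover have "{..n} = insert 0 {1..n}" by auto
  ultimately have "real (card (NN n)) = 1 + (\<Sum>m\<in>{1..n}. real (r2 m))"
    by (simp add: r2_0)
  thus ?thesis by (simp add: EE_def sum_subtractf)
qed

lemma EE_bound: "\<bar>EE n\<bar> \<le> 6 * sqrt (real n)"
proof (cases "n = 0")
  case True then show ?thesis by (simp add: EE_def)
next
  case False
  hence "1 \<le> sqrt (real n)" by simp
  moreover have "\<bar>real (card (NN n)) - pi * real n\<bar> \<le> 4 * sqrt (real n) + 1" by (rule gauss_count)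
  ultimately show ?thesis unfolding EE_card abs_le_iff by linarith
qed

lemma EE_Suc: "EE (Suc m) = EE m + (real (r2 (Suc m)) - pi)"
  by (simp add: EE_def)

lemma abel:
  fixes f :: "nat \<Rightarrow> real"
  assumes p1: "1 \<le> p" and pq: "p \<le> q"
  shows "(\<Sum>m\<in>{p..q}. (real (r2 m) - pi) * f m)
         = EE q * f q - EE (p - 1) * f p - (\<Sum>m\<in>{p..<q}. EE m * (f (Suc m) - f m))"
  using pq
proof (induction q rule: dec_induct)
  case base
  have h: "EE p = EE (p - 1) + (real (r2 p) - pi)"
    using EE_Suc[of "p - 1"] p1 by simp
  show ?case by (simp add: h algebra_simps)
next
  case (step n)
  have s1: "(\<Sum>m\<in>{p..Suc n}. (real (r2 m) - pi) * f m)
     = (\<Sum>m\<in>{p..n}. (real (r2 m) - pi) * f m) + (real (r2 (Suc n)) - pi) * f (Suc n)"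
    using step(1) by simp
  have s2: "(\<Sum>m\<in>{p..<Suc n}. EE m * (f (Suc m) - f m))
     = (\<Sum>m\<in>{p..<n}. EE m * (f (Suc m) - f m)) + EE n * (f (Suc n) - f n)"
    using step(1) by simp
  show ?case unfolding s1 s2 step(3) EE_Suc by (simp add: algebra_simps)
qed

lemma abel_bound:
  fixes f :: "nat \<Rightarrow> real"
  assumes p1: "1 \<le> p" and pq: "p \<le> q"
  shows "\<bar>\<Sum>m\<in>{p..q}. (real (r2 m) - pi) * f m\<bar>
         \<le> 6 * (sqrt (real q) * \<bar>f q\<bar> + sqrt (real (p - 1)) * \<bar>f p\<bar>
               + (\<Sum>m\<in>{p..<q}. sqrt (real m) * \<bar>f (Suc m) - f m\<bar>))"
proof -
  have b1: "\<bar>EE q * f q\<bar> \<le> 6 * sqrt (real q) * \<bar>f q\<bar>"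
    unfolding abs_mult by (intro mult_right_mono EE_bound) auto
  have b2: "\<bar>EE (p - 1) * f p\<bar> \<le> 6 * sqrt (real (p - 1)) * \<bar>f p\<bar>"
    unfolding abs_mult by (intro mult_right_mono EE_bound) auto
  have b3: "\<bar>\<Sum>m\<in>{p..<q}. EE m * (f (Suc m) - f m)\<bar>
            \<le> (\<Sum>m\<in>{p..<q}. 6 * (sqrt (real m) * \<bar>f (Suc m) - f m\<bar>))"
  proof -
    have "\<bar>\<Sum>m\<in>{p..<q}. EE m * (f (Suc m) - f m)\<bar> \<le> (\<Sum>m\<in>{p..<q}. \<bar>EE m * (f (Suc m) - f m)\<bar>)"
      by (rule sum_abs)
    also have "\<dots> \<le> (\<Sum>m\<in>{p..<q}. 6 * (sqrt (real m) * \<bar>f (Suc m) - f m\<bar>))"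
      unfolding abs_mult mult.assoc[symmetric] by (intro sum_mono mult_right_mono EE_bound) auto
    finally show ?thesis .
  qed
  have "\<bar>\<Sum>m\<in>{p..q}. (real (r2 m) - pi) * f m\<bar>
      \<le> \<bar>EE q * f q\<bar> + \<bar>EE (p - 1) * f p\<bar> + \<bar>\<Sum>m\<in>{p..<q}. EE m * (f (Suc m) - f m)\<bar>"
    unfolding abel[OF p1 pq] by linarith
  thus ?thesis using b1 b2 b3 by (simp add: sum_distrib_left algebra_simps)
qed

lemma tele_le:
  fixes x h :: "nat \<Rightarrow> real"
  assumes "p \<le> q" and "\<And>m. p \<le> m \<Longrightarrow> m < q \<Longrightarrow> x m \<le> h (Suc m) - h m"
  shows "(\<Sum>m\<in>{p..<q}. x m) \<le> h q - h p"
proof -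
  have "(\<Sum>m\<in>{p..<q}. x m) \<le> (\<Sum>m\<in>{p..<q}. h (Suc m) - h m)"
    by (intro sum_mono) (use assms(2) in auto)
  also have "\<dots> = h q - h p" by (rule sum_Suc_diff'[OF assms(1)])
  finally show ?thesis .
qed

lemma tele_ge:
  fixes x h :: "nat \<Rightarrow> real"
  assumes "p \<le> q" and "\<And>m. p \<le> m \<Longrightarrow> m < q \<Longrightarrow> h (Suc m) - h m \<le> x m"
  shows "h q - h p \<le> (\<Sum>m\<in>{p..<q}. x m)"
proof -
  have "h q - h p = (\<Sum>m\<in>{p..<q}. h (Suc m) - h m)" by (rule sum_Suc_diff'[OF assms(1), symmetric])
  also have "\<dots> \<le> (\<Sum>m\<in>{p..<q}. x m)"
    by (intro sum_mono) (use assms(2) in auto)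
  finally show ?thesis .
qed

lemma key_ineq:
  fixes a :: real assumes a: "0 < a"
  shows "sqrt a * (1 / a - 1 / (a + 1)) \<le> 2 * (1 / sqrt a - 1 / sqrt (a + 1))"
proof -
  define s where "s = sqrt a"
  define s' where "s' = sqrt (a + 1)"
  have s0: "0 < s" using a by (simp add: s_def)
  have ss: "s \<le> s'" unfolding s_def s'_def by simp
  have sq: "s * s = a" "s' * s' = a + 1" using a by (simp_all add: s_def s'_def)
  have s'0: "0 < s'" using s0 ss by linarith
  have one: "(s' - s) * (s' + s) = 1" using sq by (simp add: algebra_simps)
  have "1 \<le> 2 * s' * (s' - s)"
  proof -
    have "(s' - s) * (s' + s) \<le> (s' - s) * (2 * s')" using ss by (intro mult_left_mono) auto
    thus ?thesis using one by (simp add: algebra_simps)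
  qed
  hence "1 / (s * (s' * s')) \<le> 2 * s' * (s' - s) / (s * (s' * s'))"
    using s0 s'0 by (intro divide_right_mono) auto
  also have "2 * s' * (s' - s) / (s * (s' * s')) = 2 * (1 / s - 1 / s')"
    using s0 s'0 by (simp add: field_simps)
  also have "1 / (s * (s' * s')) = s * (1 / a - 1 / (a + 1))"
  proof -
    have "1 / a - 1 / (a + 1) = 1 / (a * (a + 1))" using a by (simp add: field_simps)
    also have "\<dots> = 1 / ((s * s) * (s' * s'))" using sq by simp
    finally have "s * (1 / a - 1 / (a + 1)) = s / ((s * s) * (s' * s'))" by simp
    also have "\<dots> = 1 / (s * (s' * s'))" using s0 by (simp add: field_simps)
    finally show ?thesis by simp
  qed
  finally show ?thesis by (simp add: s_def s'_def)
qed



lemma inv_anti: fixes x y :: real assumes "0 < x * y" "x \<le> y" shows "1 / y \<le> 1 / x"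
proof -
  have "x \<noteq> 0" "y \<noteq> 0" using assms(1) by auto
  hence "1 / x - 1 / y = (y - x) / (x * y)" by (simp add: field_simps)
  moreover have "(y - x) / (x * y) \<ge> 0" using assms by simp
  ultimately show ?thesis by simp
qed

lemma fe1: fixes x :: real assumes "0 < x" shows "x / (x\<^sup>2 + 1) = 1 / x - 1 / (x * (x\<^sup>2 + 1))"
proof -
  have p: "x\<^sup>2 + 1 > 0" using zero_le_power2[of x] by linarith
  show ?thesis using assms p by (simp add: divide_simps) (simp add: algebra_simps power2_eq_square)
qed

lemma LA:
  fixes t :: real and A :: nat
  assumes A1: "1 \<le> A" and At: "real A + 1 < t"
  shows "\<bar>\<Sum>m\<in>{1..A}. (real (r2 m) - pi) * (1 / (real m - t))\<bar> \<le> 12 * (sqrt (real A) / (t - real A))"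
proof -
  define f where "f = (\<lambda>m::nat. 1 / (real m - t))"
  have tA: "t - real A > 0" using At by simp
  have fA: "\<bar>f A\<bar> = 1 / (t - real A)" using tA by (simp add: f_def abs_minus_commute)
  have dec: "\<bar>f (Suc m) - f m\<bar> = f m - f (Suc m)" if "m < A" for m
  proof -
    have "real (Suc m) - t < 0" using that At by simp
    hence "(real m - t) * (real (Suc m) - t) > 0" by (simp add: mult_neg_neg)
    hence "1 / (real (Suc m) - t) \<le> 1 / (real m - t)" by (rule inv_anti) simp
    thus ?thesis by (simp add: f_def)
  qed
  have S: "(\<Sum>m\<in>{1..<A}. sqrt (real m) * \<bar>f (Suc m) - f m\<bar>) \<le> (- sqrt (real A) * f A) - (- sqrt (real A) * f 1)"
  proof (rule tele_le)
    show "1 \<le> A" by fact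
  next
    fix m assume m: "1 \<le> m" "m < A"
    have "sqrt (real m) * \<bar>f (Suc m) - f m\<bar> = sqrt (real m) * (f m - f (Suc m))" using dec m by simp
    also have "\<dots> \<le> sqrt (real A) * (f m - f (Suc m))"
      using dec[OF m(2)] m by (intro mult_right_mono) auto
    finally show "sqrt (real m) * \<bar>f (Suc m) - f m\<bar> \<le> - sqrt (real A) * f (Suc m) - - sqrt (real A) * f m"
      by (simp add: algebra_simps)
  qed
  have f1: "f 1 \<le> 0" using At by (simp add: f_def)
  have S2: "(\<Sum>m\<in>{1..<A}. sqrt (real m) * \<bar>f (Suc m) - f m\<bar>) \<le> sqrt (real A) * (1 / (t - real A))"
  proof -
    have "- sqrt (real A) * f A = sqrt (real A) * (1 / (t - real A))"
      using tA by (simp add: f_def field_simps)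
    moreover have "- sqrt (real A) * f 1 \<ge> 0" using f1 by (simp add: mult_nonneg_nonpos)
    ultimately show ?thesis using S by linarith
  qed
  have "\<bar>\<Sum>m\<in>{1..A}. (real (r2 m) - pi) * f m\<bar>
      \<le> 6 * (sqrt (real A) * \<bar>f A\<bar> + sqrt (real (1 - 1)) * \<bar>f 1\<bar>
               + (\<Sum>m\<in>{1..<A}. sqrt (real m) * \<bar>f (Suc m) - f m\<bar>))"
    by (rule abel_bound[OF order_refl A1])
  also have "\<dots> \<le> 6 * (sqrt (real A) * (1 / (t - real A)) + 0 + sqrt (real A) * (1 / (t - real A)))"
    using S2 fA by simp
  also have "\<dots> = 12 * (sqrt (real A) / (t - real A))" by simp
  finally show ?thesis by (simp add: f_def)
qed

lemma LB:
  fixes t :: real and B M :: nat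
  assumes B1: "1 \<le> B" and BM: "B \<le> M" and Bt: "1 \<le> real B - t" and Mt: "2 * t \<le> real M" and t0: "0 < t"
  shows "\<bar>\<Sum>m\<in>{B..M}. (real (r2 m) - pi) * (1 / (real m - t))\<bar>
     \<le> 6 * (2 + sqrt (real (B - 1)) / (real B - t) + (sqrt t / (real B - t) + 2))"
proof -
  define f where "f = (\<lambda>m::nat. 1 / (real m - t))"
  have M1: "1 \<le> real M" using B1 BM by simp
  have Mt0: "real M - t > 0" using Mt t0 by simp
  have fM: "sqrt (real M) * \<bar>f M\<bar> \<le> 2"
  proof -
    have "sqrt (real M) \<le> real M" using M1 by (rule sqrt_le_self_real)
    also have "\<dots> \<le> 2 * (real M - t)" using Mt by simp
    finally show ?thesis using Mt0 by (simp add: f_def divide_simps)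
  qed
  have fB: "sqrt (real (B - 1)) * \<bar>f B\<bar> = sqrt (real (B - 1)) / (real B - t)"
    using Bt by (simp add: f_def)
  have step: "sqrt (real m) * \<bar>f (Suc m) - f m\<bar>
      \<le> (- (sqrt t * f (Suc m)) - 2 / sqrt (real (Suc m) - t)) - (- (sqrt t * f m) - 2 / sqrt (real m - t))"
    if m: "B \<le> m" "m < M" for m
  proof -
    define a where "a = real m - t"
    have a1: "1 \<le> a" using m Bt by (simp add: a_def)
    have sa: "real (Suc m) - t = a + 1" by (simp add: a_def)
    have d: "f m - f (Suc m) = 1 / a - 1 / (a + 1)" by (simp add: f_def a_def sa)
    have dpos: "1 / (a + 1) \<le> 1 / a" using a1 by (intro inv_anti) auto
    have ad: "\<bar>f (Suc m) - f m\<bar> = 1 / a - 1 / (a + 1)" using d dpos by simp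
    have sm: "sqrt (real m) \<le> sqrt t + sqrt a"
    proof -
      have "sqrt (real m) = sqrt (t + a)" by (simp add: a_def)
      also have "\<dots> \<le> sqrt t + sqrt a" using t0 a1 by (intro sqrt_add_le_add_sqrt) auto
      finally show ?thesis .
    qed
    have "sqrt (real m) * \<bar>f (Suc m) - f m\<bar> \<le> (sqrt t + sqrt a) * (1 / a - 1 / (a + 1))"
      unfolding ad using sm dpos by (intro mult_right_mono) auto
    also have "\<dots> = sqrt t * (1 / a - 1 / (a + 1)) + sqrt a * (1 / a - 1 / (a + 1))"
      by (rule distrib_right)
    also have "\<dots> \<le> sqrt t * (1 / a - 1 / (a + 1)) + 2 * (1 / sqrt a - 1 / sqrt (a + 1))"
      using key_ineq[of a] a1 by simp
    also have "\<dots> = (- (sqrt t * f (Suc m)) - 2 / sqrt (real (Suc m) - t)) - (- (sqrt t * f m) - 2 / sqrt (real m - t))"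
      unfolding sa by (simp add: f_def a_def sa[unfolded a_def] algebra_simps)
    finally show ?thesis .
  qed
  have S: "(\<Sum>m\<in>{B..<M}. sqrt (real m) * \<bar>f (Suc m) - f m\<bar>)
      \<le> (- (sqrt t * f M) - 2 / sqrt (real M - t)) - (- (sqrt t * f B) - 2 / sqrt (real B - t))"
    by (rule tele_le[where h="\<lambda>m. - (sqrt t * f m) - 2 / sqrt (real m - t)", OF BM step]) auto
  have "f M > 0" using Mt0 unfolding f_def by (intro divide_pos_pos) auto
  hence "sqrt t * f M \<ge> 0" using t0 by (metis less_imp_le mult_nonneg_nonneg real_sqrt_ge_zero)
  moreover have "2 / sqrt (real M - t) \<ge> 0" using Mt0 by simp
  moreover have "sqrt t * f B = sqrt t / (real B - t)" by (simp add: f_def)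
  moreover have "2 / sqrt (real B - t) \<le> 2"
  proof -
    have "1 \<le> sqrt (real B - t)" using Bt by simp
    thus ?thesis by (simp add: divide_simps)
  qed
  ultimately have S2: "(\<Sum>m\<in>{B..<M}. sqrt (real m) * \<bar>f (Suc m) - f m\<bar>) \<le> sqrt t / (real B - t) + 2"
    using S by linarith
  have "\<bar>\<Sum>m\<in>{B..M}. (real (r2 m) - pi) * f m\<bar>
      \<le> 6 * (sqrt (real M) * \<bar>f M\<bar> + sqrt (real (B - 1)) * \<bar>f B\<bar>
               + (\<Sum>m\<in>{B..<M}. sqrt (real m) * \<bar>f (Suc m) - f m\<bar>))"
    by (rule abel_bound[OF B1 BM])
  also have "\<dots> \<le> 6 * (2 + sqrt (real (B - 1)) / (real B - t) + (sqrt t / (real B - t) + 2))"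
    using fM fB S2 by simp
  finally show ?thesis by (simp add: f_def)
qed

lemma LC:
  fixes p q :: nat
  assumes p1: "1 \<le> p" and pq: "p \<le> q"
  shows "\<bar>\<Sum>m\<in>{p..q}. (real (r2 m) - pi) * (real m / ((real m)\<^sup>2 + 1))\<bar> \<le> 24"
proof -
  define f where "f = (\<lambda>m::nat. real m / ((real m)\<^sup>2 + 1))"
  have fb: "sqrt (real k) * \<bar>f k\<bar> \<le> 1" if "1 \<le> k" for k :: nat
  proof -
    have "sqrt (real k) \<le> real k" using that by (intro sqrt_le_self_real) simp
    hence "sqrt (real k) * real k \<le> real k * real k" by (intro mult_right_mono) auto
    also have "\<dots> \<le> (real k)\<^sup>2 + 1" by (simp add: power2_eq_square)
    finally have le: "sqrt (real k) * real k \<le> (real k)\<^sup>2 + 1" .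
    have pos: "(real k)\<^sup>2 + 1 > 0" using zero_le_power2[of "real k"] by linarith
    have "sqrt (real k) * \<bar>f k\<bar> = (sqrt (real k) * real k) / ((real k)\<^sup>2 + 1)" by (simp add: f_def)
    also have "\<dots> \<le> 1" using le pos by simp
    finally show ?thesis .
  qed
  have fb2: "sqrt (real (p - 1)) * \<bar>f p\<bar> \<le> 1"
  proof -
    have "sqrt (real (p - 1)) * \<bar>f p\<bar> \<le> sqrt (real p) * \<bar>f p\<bar>"
      by (intro mult_right_mono) auto
    thus ?thesis using fb[OF p1] by linarith
  qed
  have step: "sqrt (real m) * \<bar>f (Suc m) - f m\<bar> \<le> (- 2 / sqrt (real (Suc m))) - (- 2 / sqrt (real m))"
    if m: "p \<le> m" "m < q" for m
  proof -
    define a where "a = real m"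
    have a1: "1 \<le> a" using m p1 by (simp add: a_def)
    define e where "e = (\<lambda>x::real. 1 / (x * (x\<^sup>2 + 1)))"
    have fe: "f k = 1 / real k - e (real k)" if "1 \<le> k" for k :: nat
      using that fe1[of "real k"] by (simp add: f_def e_def)
    have e0: "0 \<le> e (a + 1)" using a1 by (simp add: e_def)
    have e1: "e (a + 1) \<le> e a"
    proof -
      have p1: "0 < a * (a\<^sup>2 + 1)" using a1 by (simp add: add_pos_nonneg)
      have p2: "0 < (a + 1) * ((a + 1)\<^sup>2 + 1)" using a1 by (simp add: add_pos_nonneg)
      have le: "a * (a\<^sup>2 + 1) \<le> (a + 1) * ((a + 1)\<^sup>2 + 1)"
        using a1 by (intro mult_mono add_mono power_mono) auto
      show ?thesis unfolding e_def by (rule inv_anti[OF mult_pos_pos[OF p1 p2] le])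
    qed
    have e2: "e a \<le> 1 / a - 1 / (a + 1)"
    proof -
      have "1 / a - 1 / (a + 1) = 1 / (a * (a + 1))" using a1 by (simp add: field_simps)
      moreover have "1 / (a * (a\<^sup>2 + 1)) \<le> 1 / (a * (a + 1))"
      proof -
        have p1: "0 < a * (a + 1)" using a1 by simp
        have p2: "0 < a * (a\<^sup>2 + 1)" using a1 by (simp add: add_pos_nonneg)
        have le: "a * (a + 1) \<le> a * (a\<^sup>2 + 1)"
          using a1 by (intro mult_left_mono) (auto simp: power2_eq_square)
        show ?thesis by (rule inv_anti[OF mult_pos_pos[OF p1 p2] le])
      qed
      ultimately show ?thesis by (simp add: e_def)
    qed
    have d: "f m - f (Suc m) = (1 / a - 1 / (a + 1)) - (e a - e (a + 1))"
      using fe[of m] fe[of "Suc m"] a1 by (simp add: a_def add.commute)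
    have dpos: "1 / (a + 1) \<le> 1 / a" using a1 by (intro inv_anti) auto
    have ad: "\<bar>f (Suc m) - f m\<bar> \<le> 1 / a - 1 / (a + 1)"
      using d e0 e1 e2 dpos by (simp add: abs_le_iff)
    have "sqrt (real m) * \<bar>f (Suc m) - f m\<bar> \<le> sqrt a * (1 / a - 1 / (a + 1))"
      unfolding a_def using ad[unfolded a_def] by (intro mult_left_mono) auto
    also have "\<dots> \<le> 2 * (1 / sqrt a - 1 / sqrt (a + 1))" using key_ineq[of a] a1 by simp
    also have "\<dots> = (- 2 / sqrt (real (Suc m))) - (- 2 / sqrt (real m))"
      by (simp add: a_def algebra_simps add.commute)
    finally show ?thesis .
  qed
  have S: "(\<Sum>m\<in>{p..<q}. sqrt (real m) * \<bar>f (Suc m) - f m\<bar>) \<le> (- 2 / sqrt (real q)) - (- 2 / sqrt (real p))"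
    by (rule tele_le[where h="\<lambda>m. - 2 / sqrt (real m)", OF pq step]) auto
  have "2 / sqrt (real p) \<le> 2"
  proof -
    have "1 \<le> sqrt (real p)" using p1 by simp
    thus ?thesis by (simp add: divide_simps)
  qed
  moreover have "2 / sqrt (real q) \<ge> 0" by simp
  ultimately have S2: "(\<Sum>m\<in>{p..<q}. sqrt (real m) * \<bar>f (Suc m) - f m\<bar>) \<le> 2" using S by linarith
  have "\<bar>\<Sum>m\<in>{p..q}. (real (r2 m) - pi) * f m\<bar>
      \<le> 6 * (sqrt (real q) * \<bar>f q\<bar> + sqrt (real (p - 1)) * \<bar>f p\<bar>
               + (\<Sum>m\<in>{p..<q}. sqrt (real m) * \<bar>f (Suc m) - f m\<bar>))"
    by (rule abel_bound[OF p1 pq])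
  also have "\<dots> \<le> 6 * (1 + 1 + 2)"
    using fb[of q] fb2 S2 p1 pq by (intro mult_left_mono add_mono) auto
  finally show ?thesis by (simp add: f_def)
qed



lemma ln_up: fixes y :: real assumes "0 < y" shows "ln (y + 1) - ln y \<le> 1 / y"
proof -
  have e: "1 + 1 / y = (y + 1) / y" using assms by (simp add: field_simps)
  have "ln (y + 1) - ln y = ln (1 + 1 / y)"
    unfolding e using assms by (simp add: ln_div)
  also have "\<dots> \<le> 1 / y" using assms by (intro ln_add_one_self_le_self) simp
  finally show ?thesis .
qed

lemma ln_low: fixes y :: real assumes "0 < y" shows "1 / (y + 1) \<le> ln (y + 1) - ln y"
proof -
  have "ln y - ln (y + 1) = ln (y / (y + 1))"
    using assms by (simp add: ln_div)
  also have "\<dots> \<le> y / (y + 1) - 1" using assms by (intro ln_le_minus_one) simp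
  also have "\<dots> = - (1 / (y + 1))" using assms by (simp add: field_simps)
  finally show ?thesis by simp
qed

lemma ML1:
  fixes t :: real and A :: nat
  assumes At: "real A + 1 < t"
  shows "ln (t - real A - 1) - ln (t - 1) \<le> (\<Sum>m\<in>{1..A}. 1 / (real m - t))"
    and "(\<Sum>m\<in>{1..A}. 1 / (real m - t)) \<le> ln (t - real A) - ln t"
proof -
  have iv: "{1..A} = {1..<Suc A}" by auto
  have "ln (t - real (Suc A)) - ln (t - real (1::nat)) \<le> (\<Sum>m\<in>{1..<Suc A}. 1 / (real m - t))"
  proof (rule tele_ge[where h="\<lambda>m. ln (t - real m)"])
    show "1 \<le> Suc A" by simp
  next
    fix m assume m: "1 \<le> m" "m < Suc A"
    define z where "z = t - real m - 1"
    have z0: "0 < z" using m At by (simp add: z_def)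
    have "ln z - ln (z + 1) \<le> - (1 / (z + 1))" using ln_low[OF z0] by simp
    moreover have "z + 1 = t - real m" by (simp add: z_def)
    moreover have "1 / (real m - t) = - (1 / (t - real m))"
    proof -
      have "real m - t = - (t - real m)" by simp
      thus ?thesis by (simp only: divide_minus_right)
    qed
    moreover have "t - real (Suc m) = z" by (simp add: z_def)
    ultimately show "ln (t - real (Suc m)) - ln (t - real m) \<le> 1 / (real m - t)"
      by simp
  qed
  thus "ln (t - real A - 1) - ln (t - 1) \<le> (\<Sum>m\<in>{1..A}. 1 / (real m - t))"
    unfolding iv by (simp add: algebra_simps)
  have "(\<Sum>m\<in>{1..<Suc A}. 1 / (real m - t)) \<le> ln (t - real (Suc A) + 1) - ln (t - real (1::nat) + 1)"
  proof (rule tele_le[where h="\<lambda>m. ln (t - real m + 1)"])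
    show "1 \<le> Suc A" by simp
  next
    fix m assume m: "1 \<le> m" "m < Suc A"
    define y where "y = t - real m"
    have y0: "0 < y" using m At by (simp add: y_def)
    have "ln (y + 1) - ln y \<le> 1 / y" by (rule ln_up[OF y0])
    moreover have "1 / (real m - t) = - (1 / y)"
    proof -
      have "real m - t = - y" by (simp add: y_def)
      thus ?thesis by (simp only: divide_minus_right)
    qed
    moreover have "t - real (Suc m) + 1 = y" "t - real m + 1 = y + 1" by (simp_all add: y_def)
    ultimately show "1 / (real m - t) \<le> ln (t - real (Suc m) + 1) - ln (t - real m + 1)"
      by simp
  qed
  thus "(\<Sum>m\<in>{1..A}. 1 / (real m - t)) \<le> ln (t - real A) - ln t"
    unfolding iv by (simp add: algebra_simps)
qed

lemma MU1:
  fixes t :: real and B M :: nat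
  assumes Bt: "1 < real B - t" and BM: "B \<le> M"
  shows "ln (real M + 1 - t) - ln (real B - t) \<le> (\<Sum>m\<in>{B..M}. 1 / (real m - t))"
    and "(\<Sum>m\<in>{B..M}. 1 / (real m - t)) \<le> ln (real M - t) - ln (real B - 1 - t)"
proof -
  have iv: "{B..M} = {B..<Suc M}" by auto
  have BM': "B \<le> Suc M" using BM by simp
  have "ln (real (Suc M) - t) - ln (real B - t) \<le> (\<Sum>m\<in>{B..<Suc M}. 1 / (real m - t))"
  proof (rule tele_ge[where h="\<lambda>m. ln (real m - t)", OF BM'])
    fix m assume m: "B \<le> m" "m < Suc M"
    define a where "a = real m - t"
    have a0: "0 < a" using m Bt by (simp add: a_def)
    have "ln (a + 1) - ln a \<le> 1 / a" by (rule ln_up[OF a0])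
    thus "ln (real (Suc m) - t) - ln (real m - t) \<le> 1 / (real m - t)"
      by (simp add: a_def algebra_simps)
  qed
  thus "ln (real M + 1 - t) - ln (real B - t) \<le> (\<Sum>m\<in>{B..M}. 1 / (real m - t))"
    unfolding iv by (simp add: algebra_simps)
  have "(\<Sum>m\<in>{B..<Suc M}. 1 / (real m - t)) \<le> ln (real (Suc M) - 1 - t) - ln (real B - 1 - t)"
  proof (rule tele_le[where h="\<lambda>m. ln (real m - 1 - t)", OF BM'])
    fix m assume m: "B \<le> m" "m < Suc M"
    define z where "z = real m - 1 - t"
    have z0: "0 < z" using m Bt by (simp add: z_def)
    have "1 / (z + 1) \<le> ln (z + 1) - ln z" by (rule ln_low[OF z0])
    thus "1 / (real m - t) \<le> ln (real (Suc m) - 1 - t) - ln (real m - 1 - t)"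
      by (simp add: z_def algebra_simps)
  qed
  thus "(\<Sum>m\<in>{B..M}. 1 / (real m - t)) \<le> ln (real M - t) - ln (real B - 1 - t)"
    unfolding iv by (simp add: algebra_simps)
qed

lemma F2:
  fixes p q :: nat
  assumes p1: "1 \<le> p" and pq: "p \<le> Suc q"
  shows "ln (real q + 2) - ln (real p + 1) \<le> (\<Sum>m\<in>{p..q}. real m / ((real m)\<^sup>2 + 1))"
    and "(\<Sum>m\<in>{p..q}. real m / ((real m)\<^sup>2 + 1)) \<le> ln (real q + 1) - ln (real p) + 1"
proof -
  have iv: "{p..q} = {p..<Suc q}" by auto
  have lowb: "1 / (real m + 1) \<le> real m / ((real m)\<^sup>2 + 1)" if "1 \<le> m" for m :: nat
  proof -
    have "(real m)\<^sup>2 + 1 \<le> real m * (real m + 1)" using that by (simp add: power2_eq_square algebra_simps)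
    thus ?thesis using that by (simp add: divide_simps add_pos_nonneg) 
  qed
  have upb: "real m / ((real m)\<^sup>2 + 1) \<le> 1 / real m" if "1 \<le> m" for m :: nat
    using that by (simp add: divide_simps add_pos_nonneg power2_eq_square)
  have "ln (real (Suc q) + 1) - ln (real p + 1) \<le> (\<Sum>m\<in>{p..<Suc q}. real m / ((real m)\<^sup>2 + 1))"
  proof (rule tele_ge[where h="\<lambda>m. ln (real m + 1)", OF pq])
    fix m assume m: "p \<le> m" "m < Suc q"
    have m0: "0 < real m + 1" by simp
    have "ln (real m + 1 + 1) - ln (real m + 1) \<le> 1 / (real m + 1)" by (rule ln_up[OF m0])
    also have "\<dots> \<le> real m / ((real m)\<^sup>2 + 1)" using lowb m p1 by simp
    finally show "ln (real (Suc m) + 1) - ln (real m + 1) \<le> real m / ((real m)\<^sup>2 + 1)"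
      by (simp add: add.commute)
  qed
  thus "ln (real q + 2) - ln (real p + 1) \<le> (\<Sum>m\<in>{p..q}. real m / ((real m)\<^sup>2 + 1))"
    unfolding iv by (simp add: algebra_simps)
  have "(\<Sum>m\<in>{p..<Suc q}. real m / ((real m)\<^sup>2 + 1))
        \<le> (ln (real (Suc q)) - 1 / real (Suc q)) - (ln (real p) - 1 / real p)"
  proof (rule tele_le[where h="\<lambda>m. ln (real m) - 1 / real m", OF pq])
    fix m assume m: "p \<le> m" "m < Suc q"
    have m0: "0 < real m" using m p1 by simp
    have "1 / (real m + 1) \<le> ln (real m + 1) - ln (real m)" by (rule ln_low[OF m0])
    hence "1 / real m \<le> (ln (real (Suc m)) - 1 / real (Suc m)) - (ln (real m) - 1 / real m)"
      by (simp add: add.commute)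
    thus "real m / ((real m)\<^sup>2 + 1) \<le> (ln (real (Suc m)) - 1 / real (Suc m)) - (ln (real m) - 1 / real m)"
      using upb[of m] m p1 by simp
  qed
  moreover have "1 / real p \<le> 1" using p1 by simp
  moreover have "0 \<le> 1 / real (Suc q)" by simp
  moreover have "ln (real (Suc q)) = ln (real q + 1)" by (simp add: add.commute)
  ultimately show "(\<Sum>m\<in>{p..q}. real m / ((real m)\<^sup>2 + 1)) \<le> ln (real q + 1) - ln (real p) + 1"
    unfolding iv by linarith
qed



lemma lnratio: fixes x y :: real assumes "0 < y" "0 < x" "x \<le> 4 * y" shows "ln x - ln y \<le> 3"
proof -
  have "ln x - ln y = ln (x / y)" using assms by (simp add: ln_div)
  also have "\<dots> \<le> x / y - 1" using assms by (intro ln_le_minus_one) simp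
  also have "x / y \<le> 4" using assms by (simp add: divide_simps)
  finally show ?thesis by simp
qed

lemma ratio_le: fixes x y k :: real assumes "0 < y" "x \<le> k * y" shows "x / y \<le> k"
  using assms by (simp add: divide_simps)

lemma sqrt_le_2w: fixes x w :: real assumes "0 \<le> w" "x \<le> 4 * w\<^sup>2" shows "sqrt x \<le> 2 * w"
proof -
  have "sqrt x \<le> sqrt (4 * w\<^sup>2)" using assms by simp
  also have "sqrt (4 * w\<^sup>2) = 2 * w" using assms by (simp add: real_sqrt_mult)
  finally show ?thesis .
qed

lemma split_sum:
  fixes I :: "nat set" and f1 f2 :: "nat \<Rightarrow> real"
  shows "(\<Sum>m\<in>I. real (r2 m) * (f1 m - f2 m))
       = (\<Sum>m\<in>I. (real (r2 m) - pi) * f1 m) - (\<Sum>m\<in>I. (real (r2 m) - pi) * f2 m)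
         + pi * ((\<Sum>m\<in>I. f1 m) - (\<Sum>m\<in>I. f2 m))"
  by (simp add: sum_subtractf sum_distrib_left algebra_simps sum.distrib)

lemma partial_main:
  fixes u t w c :: real and A B M :: nat
  assumes w4: "4 \<le> w" and c0: "0 \<le> c" and cw: "4 * c \<le> w" and uw: "2 * w + 4 \<le> u"
    and uv: "u \<le> 2 * w\<^sup>2" and ut: "\<bar>u - t\<bar> \<le> c"
    and A1: "real A < u - w" and A2: "u - w \<le> real A + 1"
    and B1: "u + w < real B" and B2: "real B \<le> u + w + 1" and BM: "B \<le> M" and Mt: "2 * t \<le> real M"
  shows "\<bar>(\<Sum>m\<in>{1..A}. real (r2 m) * (1 / (real m - t) - real m / ((real m)\<^sup>2 + 1)))
          + (\<Sum>m\<in>{B..M}. real (r2 m) * (1 / (real m - t) - real m / ((real m)\<^sup>2 + 1)))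
          + pi * ln t\<bar> \<le> 8 * pi + 140"
proof -
  define f1 where "f1 = (\<lambda>m::nat. 1 / (real m - t))"
  define f2 where "f2 = (\<lambda>m::nat. real m / ((real m)\<^sup>2 + 1))"
  have t1: "u - c \<le> t" "t \<le> u + c" using ut by (simp_all add: abs_le_iff)
  have w0: "0 < w" using w4 by simp
  have ww: "w \<le> w\<^sup>2" using w4 by (simp add: power2_eq_square)
  have tpos: "1 < t" using t1 uw cw c0 w4 by linarith
  have tA1: "3 * w / 4 \<le> t - real A" using t1 A1 cw by linarith
  have tA2: "t - real A \<le> 2 * w" using t1 A2 cw w4 by linarith
  have Ag: "1 \<le> A" using A2 uw w4 by linarith
  have At: "real A + 1 < t" using tA1 w4 by linarith
  have tB1: "3 * w / 4 \<le> real B - t" using t1 B1 cw by linarith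
  have tB2: "real B - t \<le> 2 * w" using t1 B2 cw w4 by linarith
  have Bg: "1 \<le> B" using B1 uw w4 by linarith
  have sA: "sqrt (real A) \<le> 2 * w" using A1 uv uw w4 by (intro sqrt_le_2w) auto
  have sB: "sqrt (real (B - 1)) \<le> 2 * w"
  proof -
    have "real (B - 1) = real B - 1" using Bg by simp
    thus ?thesis using B2 uv ww w4 by (intro sqrt_le_2w) auto
  qed
  have st: "sqrt t \<le> 2 * w" using t1 uv ww cw c0 w4 by (intro sqrt_le_2w) auto
  have EA: "\<bar>\<Sum>m\<in>{1..A}. (real (r2 m) - pi) * f1 m\<bar> \<le> 32"
  proof -
    have "sqrt (real A) / (t - real A) \<le> 8 / 3" using sA tA1 w0 by (intro ratio_le) auto
    thus ?thesis using LA[OF Ag At] unfolding f1_def by linarith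
  qed
  have EB: "\<bar>\<Sum>m\<in>{B..M}. (real (r2 m) - pi) * f1 m\<bar> \<le> 56"
  proof -
    have r1: "sqrt (real (B - 1)) / (real B - t) \<le> 8 / 3" using sB tB1 w0 by (intro ratio_le) auto
    have r2: "sqrt t / (real B - t) \<le> 8 / 3" using st tB1 w0 by (intro ratio_le) auto
    have "1 \<le> real B - t" using tB1 w4 by linarith
    hence "\<bar>\<Sum>m\<in>{B..M}. (real (r2 m) - pi) * f1 m\<bar>
        \<le> 6 * (2 + sqrt (real (B - 1)) / (real B - t) + (sqrt t / (real B - t) + 2))"
      using LB[OF Bg BM _ Mt] tpos unfolding f1_def by simp
    thus ?thesis using r1 r2 unfolding distrib_left by linarith
  qed
  have EC1: "\<bar>\<Sum>m\<in>{1..A}. (real (r2 m) - pi) * f2 m\<bar> \<le> 24"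
    using LC[OF order_refl Ag] unfolding f2_def .
  have EC2: "\<bar>\<Sum>m\<in>{B..M}. (real (r2 m) - pi) * f2 m\<bar> \<le> 24"
    using LC[OF Bg BM] unfolding f2_def .
  define L1 where "L1 = (\<Sum>m\<in>{1..A}. f1 m)"
  define U1 where "U1 = (\<Sum>m\<in>{B..M}. f1 m)"
  define L2 where "L2 = (\<Sum>m\<in>{1..A}. f2 m)"
  define U2 where "U2 = (\<Sum>m\<in>{B..M}. f2 m)"
  have Bt1: "1 < real B - t" using tB1 w4 by linarith
  note l1 = ML1[OF At, folded f1_def L1_def]
  note u1 = MU1[OF Bt1 BM, folded f1_def U1_def]
  have l2: "ln (real A + 2) - ln (real 1 + 1) \<le> L2" "L2 \<le> ln (real A + 1) - ln (real (1::nat)) + 1"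
    using F2[OF order_refl, of A] unfolding L2_def f2_def by auto
  have u2: "ln (real M + 2) - ln (real B + 1) \<le> U2" "U2 \<le> ln (real M + 1) - ln (real B) + 1"
    using F2[OF Bg, of M] BM unfolding U2_def f2_def by auto
  have Mt0: "0 < real M - t" using Mt tpos by linarith
  have q1: "ln (t - real A) - ln (real B - 1 - t) \<le> 3"
    using tA1 tA2 tB1 w4 by (intro lnratio) auto
  have q2: "ln (real M - t) \<le> ln (real M + 2)" using Mt0 tpos by simp
  have q3: "ln (real B + 1) - ln (real A + 2) \<le> 3"
    using A2 B2 uw w4 by (intro lnratio) auto
  have q4: "ln (2::real) \<le> 1" using ln_le_minus_one[of 2] by simp
  have p1: "ln (t - 1) \<le> ln t" using tpos by simp
  have p2: "ln (real B - t) - ln (t - real A - 1) \<le> 3"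
    using tA1 tB2 tB1 w4 by (intro lnratio) auto
  have p3: "ln (real M + 1) - ln (real M + 1 - t) \<le> 3"
    using Mt tpos by (intro lnratio) auto
  have "real A < real B" using A1 B1 w0 by linarith
  hence "A < B" by simp
  hence AB: "real A + 1 \<le> real B" by linarith
  have p4: "ln (real A + 1) \<le> ln (real B)" using AB by simp
  define P where "P = L1 + U1 - L2 - U2"
  have Pup: "P + ln t \<le> 7" unfolding P_def using l1(2) u1(2) l2(1) u2(1) q1 q2 q3 q4 by simp
  have Plo: "-8 \<le> P + ln t" unfolding P_def using l1(1) u1(1) l2(2) u2(2) p1 p2 p3 p4 by simp
  have "pi * (P + ln t) \<le> pi * 8" using Pup by (intro mult_left_mono) auto
  moreover have "pi * (-8) \<le> pi * (P + ln t)" using Plo by (intro mult_left_mono) auto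
  moreover have "(\<Sum>m\<in>{1..A}. real (r2 m) * (f1 m - f2 m)) + (\<Sum>m\<in>{B..M}. real (r2 m) * (f1 m - f2 m))
     = ((\<Sum>m\<in>{1..A}. (real (r2 m) - pi) * f1 m) - (\<Sum>m\<in>{1..A}. (real (r2 m) - pi) * f2 m)
        + (\<Sum>m\<in>{B..M}. (real (r2 m) - pi) * f1 m) - (\<Sum>m\<in>{B..M}. (real (r2 m) - pi) * f2 m))
       + pi * P"
    unfolding split_sum P_def L1_def U1_def L2_def U2_def by (simp add: algebra_simps)
  ultimately have "\<bar>(\<Sum>m\<in>{1..A}. real (r2 m) * (f1 m - f2 m)) + (\<Sum>m\<in>{B..M}. real (r2 m) * (f1 m - f2 m))
      + pi * ln t\<bar> \<le> 8 * pi + 140"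
    using EA EB EC1 EC2 unfolding abs_le_iff distrib_left by linarith
  thus ?thesis by (simp add: f1_def f2_def)
qed



lemma ev_large: "eventually (\<lambda>v::real. 16 \<le> v \<and> 4 * v powr (1/3) \<le> sqrt v \<and> 2 * sqrt v + 4 \<le> v powr (9/10)) at_top"
proof -
  have "eventually (\<lambda>v::real. 16 \<le> v) at_top" by (rule eventually_ge_at_top)
  moreover have "eventually (\<lambda>v::real. 4 * v powr (1/3) \<le> sqrt v) at_top" by real_asymp
  moreover have "eventually (\<lambda>v::real. 2 * sqrt v + 4 \<le> v powr (9/10)) at_top" by real_asymp
  ultimately show ?thesis by eventually_elim auto
qed

lemma r2_bound: "1 \<le> m \<Longrightarrow> real (r2 m) \<le> (pi + 12) * sqrt (real m)"
proof -
  assume m: "1 \<le> m"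
  obtain k where k: "m = Suc k" using m by (cases m) auto
  have "real (r2 m) = pi + (EE m - EE k)" using EE_Suc[of k] k by simp
  also have "\<dots> \<le> pi + (6 * sqrt (real m) + 6 * sqrt (real k))"
    using EE_bound[of m] EE_bound[of k] unfolding abs_le_iff by linarith
  also have "sqrt (real k) \<le> sqrt (real m)" using k by simp
  hence "pi + (6 * sqrt (real m) + 6 * sqrt (real k)) \<le> pi + 12 * sqrt (real m)" by linarith
  also have "pi \<le> pi * sqrt (real m)" using m by simp
  hence "pi + 12 * sqrt (real m) \<le> (pi + 12) * sqrt (real m)" by (simp add: algebra_simps)
  finally show ?thesis .
qed

lemma sqrt_over_sq: fixes x :: real assumes "0 < x" shows "sqrt x / x\<^sup>2 = x powr (-3/2)"
proof -
  have e1: "sqrt x = x powr (1/2)" using assms by (simp add: powr_half_sqrt)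
  have e2: "x powr 2 = x\<^sup>2" using assms powr_realpow[of x 2] by simp
  have "x powr (1/2 - 2) = x powr (1/2) / x powr 2" by (rule powr_diff)
  hence "x powr (-3/2) = sqrt x / x\<^sup>2" unfolding e1 e2 by simp
  thus ?thesis by simp
qed

lemma term_bound:
  fixes t :: real and m :: nat
  assumes t1: "1 < t" and m1: "2 * t \<le> real m"
  shows "\<bar>real (r2 m) * (1 / (real m - t) - real m / ((real m)\<^sup>2 + 1))\<bar>
         \<le> (2 * (pi + 12) * (1 + t)) * real m powr (-3/2)"
proof -
  define x where "x = real m"
  have x1: "1 \<le> x" using t1 m1 by (simp add: x_def)
  have xt: "x / 2 \<le> x - t" using m1 by (simp add: x_def)
  have xt0: "0 < x - t" using xt x1 by linarith
  have q0: "0 < x\<^sup>2 + 1" using zero_le_power2[of x] by linarith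
  have id: "1 / (x - t) - x / (x\<^sup>2 + 1) = (1 + x * t) / ((x - t) * (x\<^sup>2 + 1))"
    using xt0 q0 by (simp add: field_simps power2_eq_square)
  have num: "0 \<le> 1 + x * t" using x1 t1 by simp
  have num2: "1 + x * t \<le> x * (1 + t)" using x1 t1 by (simp add: algebra_simps)
  have den: "x / 2 * x\<^sup>2 \<le> (x - t) * (x\<^sup>2 + 1)"
    using xt x1 by (intro mult_mono) auto
  have den0: "0 < x / 2 * x\<^sup>2" using x1 by simp
  have "\<bar>1 / (x - t) - x / (x\<^sup>2 + 1)\<bar> = (1 + x * t) / ((x - t) * (x\<^sup>2 + 1))"
    unfolding id using num xt0 q0 by simp
  also have "\<dots> \<le> (x * (1 + t)) / (x / 2 * x\<^sup>2)"
    using num num2 den den0 by (intro frac_le) auto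
  also have "\<dots> = 2 * (1 + t) / x\<^sup>2" using x1 by (simp add: field_simps power2_eq_square)
  finally have g: "\<bar>1 / (x - t) - x / (x\<^sup>2 + 1)\<bar> \<le> 2 * (1 + t) / x\<^sup>2" .
  have r: "real (r2 m) \<le> (pi + 12) * sqrt x" unfolding x_def using x1 r2_bound[of m] by (simp add: x_def)
  have "\<bar>real (r2 m) * (1 / (x - t) - x / (x\<^sup>2 + 1))\<bar> = real (r2 m) * \<bar>1 / (x - t) - x / (x\<^sup>2 + 1)\<bar>"
    by (simp add: abs_mult)
  also have "\<dots> \<le> ((pi + 12) * sqrt x) * (2 * (1 + t) / x\<^sup>2)"
    using r g by (intro mult_mono) auto
  also have "\<dots> = (2 * (pi + 12) * (1 + t)) * (sqrt x / x\<^sup>2)" by (simp add: field_simps)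
  also have "sqrt x / x\<^sup>2 = x powr (-3/2)" using x1 by (intro sqrt_over_sq) simp
  finally show ?thesis by (simp add: x_def)
qed

theorem lemma3p3:
  shows "\<exists>C V0::real. \<forall>u v t :: real.
     V0 \<le> u \<and> V0 \<le> v \<and> v powr (9/10) \<le> u \<and> u \<le> 2 * v \<and>
     t > 1 \<and> \<not> (\<exists>n::nat. t = real n \<and> r2 n > 0) \<and> \<bar>u - t\<bar> \<le> v powr (1/3)
     \<longrightarrow> (\<exists>s. ((\<lambda>m::nat. real (r2 m) * (1 / (real m - t) - real m / ((real m)^2 + 1)))
                 has_sum s) {m. m \<ge> 1 \<and> \<bar>real m - u\<bar> > v powr (1/2)}
              \<and> \<bar>s - (- pi * ln t)\<bar> \<le> C)"
proof -
  obtain V0 where V0: "\<And>v. v \<ge> V0 \<Longrightarrow> 16 \<le> v \<and> 4 * v powr (1/3) \<le> sqrt v \<and> 2 * sqrt v + 4 \<le> v powr (9/10)"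
    using ev_large unfolding eventually_at_top_linorder by blast
  show ?thesis
  proof (rule exI[of _ "8 * pi + 140"], rule exI[of _ V0], intro allI impI)
    fix u v t :: real
    assume H: "V0 \<le> u \<and> V0 \<le> v \<and> v powr (9/10) \<le> u \<and> u \<le> 2 * v \<and>
     t > 1 \<and> \<not> (\<exists>n::nat. t = real n \<and> r2 n > 0) \<and> \<bar>u - t\<bar> \<le> v powr (1/3)"
    define h where "h = (\<lambda>m::nat. real (r2 m) * (1 / (real m - t) - real m / ((real m)^2 + 1)))"
    define w where "w = sqrt v"
    define c where "c = v powr (1/3)"
    define S where "S = {m::nat. m \<ge> 1 \<and> \<bar>real m - u\<bar> > v powr (1/2)}"
    have Vv: "16 \<le> v" "4 * c \<le> w" "2 * w + 4 \<le> v powr (9/10)" using V0[of v] H by (auto simp: c_def w_def)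
    have v0: "0 \<le> v" using Vv by simp
    have wv: "v powr (1/2) = w" using v0 by (simp add: powr_half_sqrt w_def)
    have w4: "4 \<le> w"
      unfolding w_def by (rule real_le_rsqrt) (use Vv in simp)
    have c0: "0 \<le> c" by (simp add: c_def)
    have uw: "2 * w + 4 \<le> u" using Vv H by linarith
    have uv: "u \<le> 2 * w\<^sup>2" using H v0 by (simp add: w_def)
    have ut: "\<bar>u - t\<bar> \<le> c" using H by (simp add: c_def)
    have t1: "1 < t" using H by simp
    define A where "A = nat (\<lceil>u - w\<rceil> - 1)"
    define B where "B = nat (\<lfloor>u + w\<rfloor> + 1)"
    have A1: "real A < u - w" and A2: "u - w \<le> real A + 1"
    proof -
      have "0 \<le> \<lceil>u - w\<rceil> - 1" using uw w4 by linarith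
      hence "real A = real_of_int (\<lceil>u - w\<rceil> - 1)" by (simp add: A_def)
      thus "real A < u - w" "u - w \<le> real A + 1" by linarith+
    qed
    have B1: "u + w < real B" and B2: "real B \<le> u + w + 1"
    proof -
      have "0 \<le> \<lfloor>u + w\<rfloor> + 1" using uw w4 by linarith
      hence "real B = real_of_int (\<lfloor>u + w\<rfloor> + 1)" by (simp add: B_def)
      thus "u + w < real B" "real B \<le> u + w + 1" by linarith+
    qed
    have AB: "A < B" using A1 B1 w4 by linarith
    have memS: "m \<in> S \<longleftrightarrow> (1 \<le> m \<and> m \<le> A) \<or> B \<le> m" for m :: nat
    proof
      assume "m \<in> S"
      hence m: "1 \<le> m" "\<bar>real m - u\<bar> > w" by (auto simp: S_def wv)
      show "(1 \<le> m \<and> m \<le> A) \<or> B \<le> m"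
      proof (cases "real m < u")
        case True
        hence "real m < u - w" using m by (simp add: abs_if split: if_splits)
        hence "real m < real A + 1" using A2 by linarith
        thus ?thesis using m by simp
      next
        case False
        hence "real m > u + w" using m by (simp add: abs_if split: if_splits)
        hence "real m > real B - 1" using B2 by linarith
        thus ?thesis by linarith
      qed
    next
      assume "(1 \<le> m \<and> m \<le> A) \<or> B \<le> m"
      thus "m \<in> S"
      proof
        assume m: "1 \<le> m \<and> m \<le> A"
        hence "real m < u - w" using A1 by linarith
        thus ?thesis using m by (simp add: S_def wv)
      next
        assume m: "B \<le> m"
        hence "real m > u + w" using B1 by linarith
        moreover have "1 \<le> m" using m AB by linarith
        ultimately show ?thesis using w4 by (simp add: S_def wv)
      qed
    qed
    define h' where "h' = (\<lambda>m. if m \<in> S then h m else 0)"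
    define K where "K = 2 * (pi + 12) * (1 + t)"
    have summ: "summable (\<lambda>m. \<bar>h' m\<bar>)"
    proof (rule summable_comparison_test')
      show "summable (\<lambda>m::nat. K * real m powr (-3/2))"
        by (intro summable_mult) (simp add: summable_real_powr_iff)
    next
      fix m :: nat assume "nat \<lceil>2 * t\<rceil> \<le> m"
      hence m: "2 * t \<le> real m" by linarith
      have "\<bar>h m\<bar> \<le> K * real m powr (-3/2)"
        unfolding h_def K_def by (rule term_bound[OF t1 m])
      moreover have "0 \<le> K * real m powr (-3/2)"
        unfolding K_def using t1 pi_gt_zero by (intro mult_nonneg_nonneg) auto
      ultimately show "norm \<bar>h' m\<bar> \<le> K * real m powr (-3/2)" by (simp add: h'_def)
    qed
    define s where "s = suminf h'"
    have sums: "h' sums s" unfolding s_def using summable_rabs_cancel[OF summ] by (rule summable_sums)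
    have hs: "(h' has_sum s) UNIV" by (rule norm_summable_imp_has_sum) (use summ sums in simp_all)
    have hsS: "(h has_sum s) S"
      using hs has_sum_cong_neutral[where f=h' and g=h and S=UNIV and T=S and x=s] by (simp add: h'_def)
    have part: "(\<Sum>i<Suc M. h' i) = (\<Sum>m\<in>{1..A}. h m) + (\<Sum>m\<in>{B..M}. h m)" if BM: "B \<le> M" for M
    proof -
      have "(\<Sum>i<Suc M. h' i) = (\<Sum>i\<in>{..<Suc M} \<inter> S. h i)"
        unfolding h'_def by (rule sum.inter_restrict[symmetric]) simp
      also have "{..<Suc M} \<inter> S = {1..A} \<union> {B..M}"
      proof (rule set_eqI)
        fix m show "m \<in> {..<Suc M} \<inter> S \<longleftrightarrow> m \<in> {1..A} \<union> {B..M}"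
          using memS[of m] BM AB by auto
      qed
      also have "(\<Sum>i\<in>{1..A} \<union> {B..M}. h i) = (\<Sum>m\<in>{1..A}. h m) + (\<Sum>m\<in>{B..M}. h m)"
        by (rule sum.union_disjoint) (use AB in auto)
      finally show ?thesis .
    qed
    have lim: "(\<lambda>n. \<bar>(\<Sum>i<n. h' i) + pi * ln t\<bar>) \<longlonglongrightarrow> \<bar>s + pi * ln t\<bar>"
      using sums unfolding sums_def by (intro tendsto_intros)
    have "\<bar>s + pi * ln t\<bar> \<le> 8 * pi + 140"
    proof (rule LIMSEQ_le_const2[OF lim])
      show "\<exists>N. \<forall>n\<ge>N. \<bar>(\<Sum>i<n. h' i) + pi * ln t\<bar> \<le> 8 * pi + 140"
      proof (intro exI allI impI)
        fix n assume n: "Suc (B + nat \<lceil>2 * t\<rceil>) \<le> n"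
        then obtain M where M: "n = Suc M" "B + nat \<lceil>2 * t\<rceil> \<le> M" by (cases n) auto
        have BM: "B \<le> M" using M by simp
        have Mt: "2 * t \<le> real M" using M by linarith
        show "\<bar>(\<Sum>i<n. h' i) + pi * ln t\<bar> \<le> 8 * pi + 140"
          unfolding M(1) part[OF BM] h_def
          by (rule partial_main[OF w4 c0 Vv(2) uw uv ut A1 A2 B1 B2 BM Mt])
      qed
    qed
    moreover have "(h has_sum s) {m. m \<ge> 1 \<and> \<bar>real m - u\<bar> > v powr (1/2)}" using hsS by (simp add: S_def)
    ultimately show "\<exists>s. ((\<lambda>m::nat. real (r2 m) * (1 / (real m - t) - real m / ((real m)^2 + 1)))
                 has_sum s) {m. m \<ge> 1 \<and> \<bar>real m - u\<bar> > v powr (1/2)}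
              \<and> \<bar>s - (- pi * ln t)\<bar> \<le> 8 * pi + 140"
      unfolding h_def by (intro exI[of _ s]) simp
  qed
qed


end
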